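(* Let $d,m_1,\dots,m_d\in\mathbb N$ and $N=m_1\cdots m_d$. (a) For product weights $\gamma_{\mathfrak u}=\prod_{j\in\mathfrak u}\gamma_j$ (with $\gamma_j\in[0,1]$) and arbitrary real coefficients $\mathcal A(\Gamma_{m_1,\dots,m_d})$, for every $\ell\in[d]$ we have $D^*_{N,\boldsymbol\gamma}(\Gamma_{m_1,\dots,m_d},\mathcal A(\Gamma_{m_1,\dots,m_d}))\ge\frac{\gamma_\ell}{4m_\ell}$. (b) With QMC coefficients, $D^*_N(\Gamma_{m_1,\dots,m_d})=1-\prod_{j=1}^d\left(1-\frac{1}{2m_j}\right)$. (c) With QMC coefficients and arbitrary weights $\gamma_{\mathfrak u}\in[0,1]$ ($\emptyset\ne\mathfrak u\subseteq[d]$), $D^*_{N,\boldsymbol\gamma}(\Gamma_{m_1,\dots,m_d})=\max_{\emptyset\ne\mathfrak u\subseteq[d]}\gamma_{\mathfrak u}\left(1-\prod_{j\in\mathfrak u}\left(1-\frac{1}{2m_j}\right)\right)$ and $D^*_{N,\boldsymbol\gamma}(\Gamma_{m_1,\dots,m_d})\le\max_{\emptyset\ne\mathfrak u\subseteq[d]}\gamma_{\mathfrak u}\sum_{j\in\mathfrak u}\frac{1}{2m_j}$.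
   Context: Write $[d]=\{1,\dots,d\}$. The centered regular grid is $\Gamma_{m_1,\dots,m_d}=\{(\frac{2\ell_1+1}{2m_1},\dots,\frac{2\ell_d+1}{2m_d}) : \ell_j\in\{0,\dots,m_j-1\}\}$. For an $N$-point set $\mathcal P_d\subset[0,1)^d$ with real coefficients $\mathcal A(\mathcal P_d)=\{a_{\boldsymbol x}:\boldsymbol x\in\mathcal P_d\}$, the local discrepancy is $\Delta_{\mathcal P_d,\mathcal A(\mathcal P_d)}(\boldsymbol\alpha)=\sum_{\boldsymbol x\in\mathcal P_d}a_{\boldsymbol x}\mathbf 1_{[\boldsymbol 0,\boldsymbol\alpha)}(\boldsymbol x)-\prod_{j=1}^d\alpha_j$ for $\boldsymbol\alpha\in[0,1]^d$, with $[\boldsymbol 0,\boldsymbol\alpha)=[0,\alpha_1)\times\cdots\times[0,\alpha_d)$. The $\boldsymbol\gamma$-weighted star discrepancy is $D^*_{N,\boldsymbol\gamma}(\mathcal P_d,\mathcal A(\mathcal P_d))=\sup_{\boldsymbol\alpha\in[0,1]^d}\max_{\emptyset\ne\mathfrak u\subseteq[d]}\gamma_{\mathfrak u}|\Delta_{\mathcal P_d,\mathcal A(\mathcal P_d)}((\boldsymbol\alpha_{\mathfrak u},\boldsymbol 1))|$, where $(\boldsymbol\alpha_{\mathfrak u},\boldsymbol 1)=(y_1,\dots,y_d)$ with $y_j=\alpha_j$ for $j\in\mathfrak u$ and $y_j=1$ otherwise. QMC coefficients means $a_{\boldsymbol x}=1/N$ for all $\boldsymbol x$; in that case one writes $D^*_{N,\boldsymbol\gamma}(\mathcal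 P_d)$. The (unweighted) star discrepancy with QMC coefficients is $D^*_N(\mathcal P_d)=\sup_{\boldsymbol\alpha\in[0,1]^d}|\Delta_{\mathcal P_d}(\boldsymbol\alpha)|$ (the case $\gamma_{[d]}=1$, $\gamma_{\mathfrak u}=0$ for $\mathfrak u\subsetneq[d]$). *)

theory Defs
  imports "HOL-Analysis.Analysis"
begin

text \<open>Points of [0,1)^d are modelled as functions nat => real; only the
coordinates 1..d are relevant (index set [d] = {1..d}).\<close>

definition centered_grid :: "nat \<Rightarrow> (nat \<Rightarrow> nat) \<Rightarrow> (nat \<Rightarrow> real) set" where
  "centered_grid d m = {x. \<exists>l::nat \<Rightarrow> nat. (\<forall>j\<in>{1..d}. l j < m j) \<and>
      x = (\<lambda>j. if j \<in> {1..d} then (2 * real (l j) + 1) / (2 * real (m j)) else 0)}"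

definition local_disc :: "nat \<Rightarrow> (nat \<Rightarrow> real) set \<Rightarrow> ((nat \<Rightarrow> real) \<Rightarrow> real) \<Rightarrow> (nat \<Rightarrow> real) \<Rightarrow> real" where
  "local_disc d P a \<alpha> =
     (\<Sum>x\<in>P. a x * (if \<forall>j\<in>{1..d}. 0 \<le> x j \<and> x j < \<alpha> j then 1 else 0)) - (\<Prod>j\<in>{1..d}. \<alpha> j)"

definition unit_box :: "nat \<Rightarrow> (nat \<Rightarrow> real) set" where
  "unit_box d = {\<alpha>. \<forall>j\<in>{1..d}. 0 \<le> \<alpha> j \<and> \<alpha> j \<le> 1}"

definition weighted_star_disc :: "nat \<Rightarrow> (nat \<Rightarrow> real) set \<Rightarrow> ((nat \<Rightarrow> real) \<Rightarrow> real) \<Rightarrow> (nat set \<Rightarrow> real) \<Rightarrow> real" where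
  "weighted_star_disc d P a \<gamma> =
     (SUP p \<in> {(\<alpha>, u). \<alpha> \<in> unit_box d \<and> u \<noteq> {} \<and> u \<subseteq> {1..d}}.
        \<gamma> (snd p) * \<bar>local_disc d P a (\<lambda>j. if j \<in> snd p then fst p j else 1)\<bar>)"

definition star_disc :: "nat \<Rightarrow> (nat \<Rightarrow> real) set \<Rightarrow> ((nat \<Rightarrow> real) \<Rightarrow> real) \<Rightarrow> real" where
  "star_disc d P a = (SUP \<alpha> \<in> unit_box d. \<bar>local_disc d P a \<alpha>\<bar>)"

end

theory Submission
  imports Defs
begin


lemma two_var:
  fixes a b A B dl E :: real
  assumes "0\<le>a" "a\<le>1" "0\<le>b" "b\<le>1" "0\<le>A" "A\<le>1" "0\<le>B" "B\<le>1"
    "\<bar>a-b\<bar> \<le> dl" "dl \<le> 1" "\<bar>A-B\<bar> \<le> E" "E \<le> 1"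
  shows "\<bar>a*A - b*B\<bar> \<le> 1 - (1-dl)*(1-E)"
proof -
  have key: "x*X - y*Y \<le> 1 - (1-dl)*(1-E)"
    if h: "0\<le>x" "x\<le>1" "0\<le>y" "y\<le>1" "0\<le>X" "X\<le>1" "0\<le>Y" "Y\<le>1"
      "x - y \<le> dl" "y - x \<le> dl" "X-Y \<le> E" "Y - X \<le> E" for x y X Y :: real
  proof -
    have dl0: "0 \<le> dl" "0 \<le> E" using h by linarith+
    have e1: "1 - (1-dl)*(1-E) = E + dl*(1-E)" "1 - (1-dl)*(1-E) = dl + E*(1-dl)" by algebra+
    have p1: "0 \<le> dl*(1-E)" "0 \<le> E*(1-dl)" using dl0 assms by (auto intro: mult_nonneg_nonneg)
    have b1: "E \<le> 1 - (1-dl)*(1-E)" using e1(1) p1(1) by linarith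
    have b2: "dl \<le> 1 - (1-dl)*(1-E)" using e1(2) p1(2) by linarith
    show ?thesis
    proof (cases "x \<le> y")
      case True
      then have "x*X - y*Y \<le> y*X - y*Y" using h by (simp add: mult_right_mono)
      also have "\<dots> = y*(X-Y)" by algebra
      also have "\<dots> \<le> E"
      proof (cases "X - Y \<le> 0")
        case True then have "y*(X-Y) \<le> 0" using h by (simp add: mult_nonneg_nonpos)
        then show ?thesis using dl0 by linarith
      next
        case False then have "y*(X-Y) \<le> X-Y" using h by (intro mult_left_le_one_le) auto
        then show ?thesis using h by linarith
      qed
      finally show ?thesis using b1 by linarith
    next
      case False
      show ?thesis
      proof (cases "X \<le> Y")
        case True
        then have "x*X - y*Y \<le> x*X - y*X" using h by (simp add: mult_left_mono)
        also have "\<dots> = (x-y)*X" by algebra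
        also have "\<dots> \<le> x - y" using h False by (intro mult_left_le) auto
        finally show ?thesis using b2 h by linarith
      next
        case F2: False
        show ?thesis
        proof (cases "x - dl < 0 \<or> X - E < 0")
          case True
          have "0 \<le> y*Y" using h by simp
          then have "x*X - y*Y \<le> x*X" by simp
          moreover have "x*X \<le> x" "x*X \<le> X" using h by (auto intro: mult_left_le mult_left_le_one_le)
          ultimately show ?thesis using True b1 b2 by linarith
        next
          case F3: False
          have "(x-dl)*(X-E) \<le> y*Y" using F3 h by (intro mult_mono) auto
          then have "x*X - y*Y \<le> x*X - (x-dl)*(X-E)" by linarith
          also have "\<dots> = x*E + dl*X - dl*E" by algebra
          also have "\<dots> \<le> E + dl - dl*E"
          proof -
            have "x*E \<le> E" "dl*X \<le> dl" using h dl0 by (auto intro: mult_left_le mult_left_le_one_le)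
            then show ?thesis by linarith
          qed
          also have "\<dots> = 1 - (1-dl)*(1-E)" by algebra
          finally show ?thesis .
        qed
      qed
    qed
  qed
  have 1: "a*A - b*B \<le> 1 - (1-dl)*(1-E)" using assms by (intro key) auto
  have 2: "b*B - a*A \<le> 1 - (1-dl)*(1-E)" using assms by (intro key) auto
  show ?thesis using 1 2 by linarith
qed

lemma prod_ineq:
  fixes a b e :: "nat \<Rightarrow> real"
  assumes "finite S" "\<forall>j\<in>S. 0\<le>a j \<and> a j\<le>1 \<and> 0\<le>b j \<and> b j\<le>1 \<and> \<bar>a j - b j\<bar> \<le> e j \<and> e j \<le> 1"
  shows "\<bar>(\<Prod>j\<in>S. a j) - (\<Prod>j\<in>S. b j)\<bar> \<le> 1 - (\<Prod>j\<in>S. 1 - e j)"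
  using assms
proof (induction S rule: finite_induct)
  case empty then show ?case by simp
next
  case (insert x F)
  have IH: "\<bar>(\<Prod>j\<in>F. a j) - (\<Prod>j\<in>F. b j)\<bar> \<le> 1 - (\<Prod>j\<in>F. 1 - e j)" using insert by auto
  have pa: "0 \<le> (\<Prod>j\<in>F. a j)" "(\<Prod>j\<in>F. a j) \<le> 1" using insert.prems
    by (auto intro: prod_nonneg prod_le_1)
  have pb: "0 \<le> (\<Prod>j\<in>F. b j)" "(\<Prod>j\<in>F. b j) \<le> 1" using insert.prems
    by (auto intro: prod_nonneg prod_le_1)
  have pe: "0 \<le> (\<Prod>j\<in>F. 1 - e j)"
  proof -
    have "\<forall>j\<in>F. 0 \<le> 1 - e j" using insert.prems by auto
    then show ?thesis by (intro prod_nonneg) auto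
  qed
  have "\<bar>a x * (\<Prod>j\<in>F. a j) - b x * (\<Prod>j\<in>F. b j)\<bar> \<le> 1 - (1 - e x) * (1 - (1 - (\<Prod>j\<in>F. 1 - e j)))"
    using insert.prems pa pb pe IH by (intro two_var) auto
  moreover have "prod a (insert x F) = a x * prod a F" "prod b (insert x F) = b x * prod b F"
    "(\<Prod>j\<in>insert x F. 1 - e j) = (1 - e x) * (\<Prod>j\<in>F. 1 - e j)"
    using insert.hyps by simp_all
  ultimately show ?case by simp
qed

lemma weier:
  fixes e :: "nat \<Rightarrow> real"
  assumes "finite S" "\<forall>j\<in>S. 0\<le>e j \<and> e j\<le>1"
  shows "1 - (\<Prod>j\<in>S. 1 - e j) \<le> (\<Sum>j\<in>S. e j)"
  using assms
proof (induction S rule: finite_induct)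
  case empty then show ?case by simp
next
  case (insert x F)
  have IH: "1 - (\<Prod>j\<in>F. 1 - e j) \<le> (\<Sum>j\<in>F. e j)" using insert by auto
  have p: "0 \<le> (\<Prod>j\<in>F. 1 - e j)" "(\<Prod>j\<in>F. 1 - e j) \<le> 1" using insert.prems
    by (auto intro: prod_nonneg prod_le_1)
  have "1 - (1 - e x) * (\<Prod>j\<in>F. 1 - e j) \<le> e x + (1 - (\<Prod>j\<in>F. 1 - e j))"
    using p insert.prems by (auto simp: algebra_simps intro!: mult_left_le)
  then show ?case using insert IH by simp
qed



definition cnt :: "nat \<Rightarrow> real \<Rightarrow> real" where
  "cnt m t = real (card {k. k < m \<and> (2*real k+1)/(2*real m) < t}) / real m"

lemma cnt_set:
  assumes "m \<ge> 1"
  shows "{k. k < m \<and> (2*real k+1)/(2*real m) < t} = {..< min m (nat \<lceil>real m * t - 1/2\<rceil>)}"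
proof -
  have "(2*real k+1)/(2*real m) < t \<longleftrightarrow> int k < \<lceil>real m * t - 1/2\<rceil>" for k
  proof -
    have "(2*real k+1)/(2*real m) < t \<longleftrightarrow> 2*real k+1 < t * (2*real m)"
      using assms by (simp add: pos_divide_less_eq)
    also have "\<dots> \<longleftrightarrow> real_of_int (int k) < real m * t - 1/2" by (simp add: algebra_simps) linarith
    also have "\<dots> \<longleftrightarrow> int k < \<lceil>real m * t - 1/2\<rceil>" by (simp add: less_ceiling_iff)
    finally show ?thesis .
  qed
  then have "k < m \<and> (2*real k+1)/(2*real m) < t \<longleftrightarrow> k < min m (nat \<lceil>real m * t - 1/2\<rceil>)" for k
    by (simp add: zless_nat_eq_int_zless)
  then show ?thesis by blast
qed

lemma cnt_bound:
  assumes "m \<ge> 1" "0 \<le> t" "t \<le> 1"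
  shows "0 \<le> cnt m t" "cnt m t \<le> 1" "\<bar>cnt m t - t\<bar> \<le> 1/(2*real m)"
proof -
  define c where "c = \<lceil>real m * t - 1/2\<rceil>"
  define n where "n = min m (nat c)"
  have cn: "cnt m t = real n / real m" unfolding cnt_def n_def c_def using cnt_set[OF assms(1)] by simp
  have c1: "real m * t - 1/2 \<le> real_of_int c" unfolding c_def by simp
  have c2: "real_of_int c \<le> real m * t + 1/2" unfolding c_def
    using of_int_ceiling_diff_one_le[of "real m * t - 1/2"] by linarith
  have mt: "0 \<le> real m * t" "real m * t \<le> real m" using assms by (auto simp: mult_left_le)
  have nb: "real m * t - 1/2 \<le> real n \<and> real n \<le> real m * t + 1/2 \<and> n \<le> m"
  proof (cases "c \<le> 0")
    case True then have "n = 0" unfolding n_def by simp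
    then show ?thesis using c1 True mt by simp
  next
    case False
    then have rc: "real (nat c) = real_of_int c" by simp
    show ?thesis
    proof (cases "nat c \<le> m")
      case True then have "n = nat c" unfolding n_def by simp
      then show ?thesis using rc c1 c2 True by simp
    next
      case F: False then have "n = m" unfolding n_def by simp
      moreover have "real m < real (nat c)" using F by simp
      ultimately show ?thesis using rc c2 mt by simp
    qed
  qed
  have m0: "real m > 0" using assms by simp
  show "0 \<le> cnt m t" using cn by simp
  show "cnt m t \<le> 1" using cn nb m0 by (simp add: divide_le_eq)
  have "\<bar>real n - real m * t\<bar> \<le> 1/2" using nb by linarith
  then have "\<bar>real n - real m * t\<bar> / real m \<le> (1/2) / real m" using m0 by (intro divide_right_mono) auto
  moreover have "\<bar>real n - real m * t\<bar> / real m = \<bar>cnt m t - t\<bar>"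
  proof -
    have "real n - real m*t = real m*(cnt m t - t)" using cn m0 by (simp add: field_simps)
    then show ?thesis using m0 by (simp add: abs_mult)
  qed
  ultimately show "\<bar>cnt m t - t\<bar> \<le> 1/(2*real m)" by (simp add: divide_divide_eq_left)
qed

lemma cnt_top:
  assumes "m \<ge> 1" "t > 1 - 1/(2*real m)"
  shows "cnt m t = 1"
proof -
  have m0: "real m > 0" using assms by simp
  have "2*real m * t > 2 * real m - 1"
  proof -
    have "2*real m * (1 - 1/(2*real m)) = 2*real m - 1" using m0 by (simp add: field_simps)
    moreover have "2*real m * (1 - 1/(2*real m)) < 2*real m * t" using assms m0 by simp
    ultimately show ?thesis by simp
  qed
  have "(2*real k+1)/(2*real m) < t" if "k < m" for k
  proof -
    have "real k + 1 \<le> real m" using that by linarith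
    then have "2*real k+1 < t * (2*real m)" using \<open>2*real m * t > 2 * real m - 1\<close> by (simp add: algebra_simps)
    then show ?thesis using m0 by (simp add: pos_divide_less_eq)
  qed
  then have "{k. k < m \<and> (2*real k+1)/(2*real m) < t} = {..<m}" by auto
  then show ?thesis unfolding cnt_def using m0 by simp
qed



definition gpt :: "nat \<Rightarrow> (nat\<Rightarrow>nat) \<Rightarrow> (nat\<Rightarrow>nat) \<Rightarrow> (nat\<Rightarrow>real)" where
  "gpt d m l = (\<lambda>j. if j \<in> {1..d} then (2*real(l j)+1)/(2*real(m j)) else 0)"

lemma grid_img: "centered_grid d m = gpt d m ` (PiE {1..d} (\<lambda>j. {..<m j}))"
proof
  show "centered_grid d m \<subseteq> gpt d m ` (PiE {1..d} (\<lambda>j. {..<m j}))"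
  proof
    fix x assume "x \<in> centered_grid d m"
    then obtain l where l: "\<forall>j\<in>{1..d}. l j < m j"
      "x = (\<lambda>j. if j \<in> {1..d} then (2 * real (l j) + 1) / (2 * real (m j)) else 0)"
      unfolding centered_grid_def by blast
    have "restrict l {1..d} \<in> PiE {1..d} (\<lambda>j. {..<m j})" using l(1) by auto
    moreover have "x = gpt d m (restrict l {1..d})" using l(2) unfolding gpt_def by auto
    ultimately show "x \<in> gpt d m ` (PiE {1..d} (\<lambda>j. {..<m j}))" by blast
  qed
  show "gpt d m ` (PiE {1..d} (\<lambda>j. {..<m j})) \<subseteq> centered_grid d m"
    unfolding centered_grid_def gpt_def by (auto simp: PiE_iff)
qed

lemma grid_inj:
  assumes "\<forall>j\<in>{1..d}. m j \<ge> 1"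
  shows "inj_on (gpt d m) (PiE {1..d} (\<lambda>j. {..<m j}))"
proof
  fix l l' assume l: "l \<in> PiE {1..d} (\<lambda>j. {..<m j})" "l' \<in> PiE {1..d} (\<lambda>j. {..<m j})"
    and eq: "gpt d m l = gpt d m l'"
  show "l = l'"
  proof (rule PiE_ext[OF l])
    fix i assume i: "i \<in> {1..d}"
    have "(2*real(l i)+1)/(2*real(m i)) = (2*real(l' i)+1)/(2*real(m i))"
      using fun_cong[OF eq, of i] i unfolding gpt_def by simp
    moreover have "real (m i) > 0" using assms i by (metis of_nat_0_less_iff less_le_trans zero_less_one)
    ultimately show "l i = l' i" by simp
  qed
qed

lemma grid_fin: "finite (centered_grid d m)"
  unfolding grid_img by (intro finite_imageI finite_PiE) auto

lemma LD:
  assumes hm: "\<forall>j\<in>{1..d}. m j \<ge> 1"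
  shows "local_disc d (centered_grid d m) (\<lambda>_. 1 / (\<Prod>j\<in>{1..d}. real (m j))) \<alpha>
     = (\<Prod>j\<in>{1..d}. cnt (m j) (\<alpha> j)) - (\<Prod>j\<in>{1..d}. \<alpha> j)"
proof -
  define P where "P = PiE {1..d} (\<lambda>j. {..<m j})"
  define c where "c = 1 / (\<Prod>j\<in>{1..d}. real (m j))"
  define K where "K = (\<lambda>j. {k. k < m j \<and> (2*real k+1)/(2*real (m j)) < \<alpha> j})"
  have finP: "finite P" unfolding P_def by (intro finite_PiE) auto
  have "(\<Sum>x\<in>centered_grid d m. c * (if \<forall>j\<in>{1..d}. 0 \<le> x j \<and> x j < \<alpha> j then 1 else 0))
      = (\<Sum>l\<in>P. c * (if \<forall>j\<in>{1..d}. 0 \<le> gpt d m l j \<and> gpt d m l j < \<alpha> j then 1 else 0))"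
    unfolding grid_img P_def by (subst sum.reindex[OF grid_inj[OF hm]]) simp
  also have "\<dots> = (\<Sum>l\<in>P. c * (if l \<in> PiE {1..d} K then 1 else 0))"
  proof (rule sum.cong[OF refl])
    fix l assume l: "l \<in> P"
    have "(\<forall>j\<in>{1..d}. 0 \<le> gpt d m l j \<and> gpt d m l j < \<alpha> j) \<longleftrightarrow> l \<in> PiE {1..d} K"
      using l unfolding P_def K_def gpt_def by (auto simp: PiE_iff)
    then show "c * (if \<forall>j\<in>{1..d}. 0 \<le> gpt d m l j \<and> gpt d m l j < \<alpha> j then 1 else 0)
       = c * (if l \<in> PiE {1..d} K then 1 else 0)" by simp
  qed
  also have "\<dots> = c * real (card (PiE {1..d} K))"
  proof -
    have sub: "PiE {1..d} K \<subseteq> P" unfolding P_def K_def by (auto simp: PiE_iff)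
    have "(\<Sum>l\<in>P. c * (if l \<in> PiE {1..d} K then 1 else 0)) = c * (\<Sum>l\<in>P. (if l \<in> PiE {1..d} K then 1 else 0))"
      by (simp add: sum_distrib_left)
    also have "(\<Sum>l\<in>P. (if l \<in> PiE {1..d} K then 1 else 0)) = (\<Sum>l\<in>P \<inter> PiE {1..d} K. (1::real))"
      using finP by (simp add: sum.inter_restrict[symmetric])
    also have "P \<inter> PiE {1..d} K = PiE {1..d} K" using sub by blast
    finally show ?thesis by simp
  qed
  also have "\<dots> = c * (\<Prod>j\<in>{1..d}. real (card (K j)))" by (simp add: card_PiE)
  also have "\<dots> = (\<Prod>j\<in>{1..d}. cnt (m j) (\<alpha> j))"
    unfolding c_def cnt_def K_def by (simp add: prod_dividef)
  finally show ?thesis unfolding local_disc_def c_def by simp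
qed



lemma LDu:
  assumes hm: "\<forall>j\<in>{1..d}. m j \<ge> 1" and u: "u \<subseteq> {1..d}"
  shows "local_disc d (centered_grid d m) (\<lambda>_. 1 / (\<Prod>j\<in>{1..d}. real (m j))) (\<lambda>j. if j \<in> u then \<alpha> j else 1)
     = (\<Prod>j\<in>u. cnt (m j) (\<alpha> j)) - (\<Prod>j\<in>u. \<alpha> j)"
proof -
  have c1: "cnt (m j) 1 = 1" if "j \<in> {1..d}" for j
  proof (rule cnt_top)
    show "m j \<ge> 1" using hm that by auto
    then show "1 > 1 - 1/(2*real (m j))" by simp
  qed
  have "(\<Prod>j\<in>{1..d}. cnt (m j) (if j \<in> u then \<alpha> j else 1)) = (\<Prod>j\<in>{1..d}. if j \<in> u then cnt (m j) (\<alpha> j) else 1)"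
    by (rule prod.cong) (auto simp: c1)
  also have "\<dots> = (\<Prod>j\<in>{1..d} \<inter> u. cnt (m j) (\<alpha> j))" by (simp add: prod.inter_restrict)
  also have "{1..d} \<inter> u = u" using u by blast
  finally have 1: "(\<Prod>j\<in>{1..d}. cnt (m j) (if j \<in> u then \<alpha> j else 1)) = (\<Prod>j\<in>u. cnt (m j) (\<alpha> j))" .
  have "(\<Prod>j\<in>{1..d}. (if j \<in> u then \<alpha> j else 1)) = (\<Prod>j\<in>{1..d} \<inter> u. \<alpha> j)" by (simp add: prod.inter_restrict)
  also have "{1..d} \<inter> u = u" using u by blast
  finally have 2: "(\<Prod>j\<in>{1..d}. (if j \<in> u then \<alpha> j else 1)) = (\<Prod>j\<in>u. \<alpha> j)" .
  show ?thesis unfolding LD[OF hm] 1 2 ..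
qed

lemma upper:
  assumes hm: "\<forall>j\<in>{1..d}. m j \<ge> 1" and u: "u \<subseteq> {1..d}" and a: "\<alpha> \<in> unit_box d"
  shows "\<bar>local_disc d (centered_grid d m) (\<lambda>_. 1 / (\<Prod>j\<in>{1..d}. real (m j))) (\<lambda>j. if j \<in> u then \<alpha> j else 1)\<bar>
     \<le> 1 - (\<Prod>j\<in>u. 1 - 1 / (2 * real (m j)))"
  unfolding LDu[OF hm u]
proof (rule prod_ineq)
  show "finite u" using u finite_subset by blast
  show "\<forall>j\<in>u. 0 \<le> cnt (m j) (\<alpha> j) \<and> cnt (m j) (\<alpha> j) \<le> 1 \<and> 0 \<le> \<alpha> j \<and> \<alpha> j \<le> 1 \<and>
        \<bar>cnt (m j) (\<alpha> j) - \<alpha> j\<bar> \<le> 1 / (2 * real (m j)) \<and> 1 / (2 * real (m j)) \<le> 1"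
  proof
    fix j assume j: "j \<in> u"
    then have j': "j \<in> {1..d}" using u by blast
    have mj: "m j \<ge> 1" using hm j' by auto
    have aj: "0 \<le> \<alpha> j" "\<alpha> j \<le> 1" using a j' unfolding unit_box_def by auto
    have "1 / (2 * real (m j)) \<le> 1" using mj by simp
    then show "0 \<le> cnt (m j) (\<alpha> j) \<and> cnt (m j) (\<alpha> j) \<le> 1 \<and> 0 \<le> \<alpha> j \<and> \<alpha> j \<le> 1 \<and>
        \<bar>cnt (m j) (\<alpha> j) - \<alpha> j\<bar> \<le> 1 / (2 * real (m j)) \<and> 1 / (2 * real (m j)) \<le> 1"
      using cnt_bound[OF mj aj] aj by auto
  qed
qed

lemma Bu_bounds:
  fixes m :: "nat \<Rightarrow> nat" and u :: "nat set"
  assumes hm: "\<forall>j\<in>{1..d}. m j \<ge> 1" and u: "u \<subseteq> {1..d}"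
  shows "0 \<le> 1 - (\<Prod>j\<in>u. 1 - 1 / (2 * real (m j)))" "1 - (\<Prod>j\<in>u. 1 - 1 / (2 * real (m j))) \<le> 1"
    "1 - (\<Prod>j\<in>u. 1 - 1 / (2 * real (m j))) \<le> (\<Sum>j\<in>u. 1 / (2 * real (m j)))"
proof -
  have h: "\<forall>j\<in>u. 0 \<le> 1 / (2 * real (m j)) \<and> 1 / (2 * real (m j)) \<le> 1"
  proof
    fix j assume "j \<in> u" then have "m j \<ge> 1" using hm u by auto
    then show "0 \<le> 1 / (2 * real (m j)) \<and> 1 / (2 * real (m j)) \<le> 1" by simp
  qed
  then have "\<forall>j\<in>u. 0 \<le> 1 - 1 / (2 * real (m j)) \<and> 1 - 1 / (2 * real (m j)) \<le> 1" by auto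
  then have "0 \<le> (\<Prod>j\<in>u. 1 - 1 / (2 * real (m j)))" "(\<Prod>j\<in>u. 1 - 1 / (2 * real (m j))) \<le> 1"
    by (auto intro: prod_nonneg prod_le_1)
  then show "0 \<le> 1 - (\<Prod>j\<in>u. 1 - 1 / (2 * real (m j)))" "1 - (\<Prod>j\<in>u. 1 - 1 / (2 * real (m j))) \<le> 1"
    by auto
  show "1 - (\<Prod>j\<in>u. 1 - 1 / (2 * real (m j))) \<le> (\<Sum>j\<in>u. 1 / (2 * real (m j)))"
    using weier[of u "\<lambda>j. 1 / (2 * real (m j))"] h u finite_subset by blast
qed

lemma lower:
  assumes hm: "\<forall>j\<in>{1..d}. m j \<ge> 1" and u: "u \<subseteq> {1..d}" and eta: "\<eta> > 0"
  shows "\<exists>\<alpha>\<in>unit_box d. \<bar>local_disc d (centered_grid d m) (\<lambda>_. 1 / (\<Prod>j\<in>{1..d}. real (m j))) (\<lambda>j. if j \<in> u then \<alpha> j else 1)\<bar>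
     \<ge> 1 - (\<Prod>j\<in>u. 1 - 1 / (2 * real (m j))) - \<eta>"
proof -
  define \<delta> where "\<delta> = (\<lambda>j. 1 / (2 * real (m j)))"
  define S where "S = (\<Sum>j\<in>u. \<delta> j)"
  define \<epsilon> where "\<epsilon> = min 1 (\<eta> / (S + 1))"
  define \<alpha> where "\<alpha> = (\<lambda>j. 1 - (1 - \<epsilon>) * \<delta> j)"
  have fu: "finite u" using u finite_subset by blast
  have dj: "0 < \<delta> j" "\<delta> j \<le> 1/2" if "j \<in> {1..d}" for j
  proof -
    have "m j \<ge> 1" using hm that by blast
    then show "0 < \<delta> j" "\<delta> j \<le> 1/2" unfolding \<delta>_def by auto
  qed
  have S0: "0 \<le> S" unfolding S_def using dj u by (intro sum_nonneg) (auto simp: less_imp_le)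
  have e0: "0 < \<epsilon>" "\<epsilon> \<le> 1" unfolding \<epsilon>_def using eta S0 by auto
  have eS: "\<epsilon> * S \<le> \<eta>"
  proof -
    have "\<epsilon> * S \<le> \<eta> / (S + 1) * S" unfolding \<epsilon>_def using S0 by (intro mult_right_mono) auto
    also have "\<dots> \<le> \<eta>" using S0 eta by (simp add: divide_le_eq field_simps)
    finally show ?thesis .
  qed
  have aj: "0 \<le> \<alpha> j \<and> \<alpha> j \<le> 1 \<and> \<alpha> j > 1 - \<delta> j" if "j \<in> {1..d}" for j
  proof -
    have "(1 - \<epsilon>) * \<delta> j \<le> \<delta> j" "0 \<le> (1 - \<epsilon>) * \<delta> j" "(1 - \<epsilon>) * \<delta> j < \<delta> j"
      using e0 dj[OF that] by (auto simp: mult_left_le_one_le)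
    then show ?thesis unfolding \<alpha>_def using dj[OF that] by linarith
  qed
  have box: "\<alpha> \<in> unit_box d" unfolding unit_box_def using aj by auto
  have c1: "(\<Prod>j\<in>u. cnt (m j) (\<alpha> j)) = 1"
  proof (rule prod.neutral, rule ballI)
    fix j assume "j \<in> u" then have j: "j \<in> {1..d}" using u by auto
    show "cnt (m j) (\<alpha> j) = 1" using aj[OF j] hm j unfolding \<delta>_def by (intro cnt_top) auto
  qed
  have "\<bar>(\<Prod>j\<in>u. \<alpha> j) - (\<Prod>j\<in>u. 1 - \<delta> j)\<bar> \<le> 1 - (\<Prod>j\<in>u. 1 - \<epsilon> * \<delta> j)"
  proof (rule prod_ineq[OF fu], rule ballI)
    fix j assume "j \<in> u" then have j: "j \<in> {1..d}" using u by auto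
    have "\<epsilon> * \<delta> j \<le> \<delta> j" using e0 dj[OF j] by (simp add: mult_left_le_one_le)
    moreover have "\<alpha> j - (1 - \<delta> j) = \<epsilon> * \<delta> j" unfolding \<alpha>_def by algebra
    moreover have "0 \<le> \<epsilon> * \<delta> j" using e0 dj[OF j] by simp
    ultimately show "0 \<le> \<alpha> j \<and> \<alpha> j \<le> 1 \<and> 0 \<le> 1 - \<delta> j \<and> 1 - \<delta> j \<le> 1 \<and> \<bar>\<alpha> j - (1 - \<delta> j)\<bar> \<le> \<epsilon> * \<delta> j \<and> \<epsilon> * \<delta> j \<le> 1"
      using aj[OF j] dj[OF j] by auto
  qed
  also have "\<dots> \<le> (\<Sum>j\<in>u. \<epsilon> * \<delta> j)"
  proof (rule weier[OF fu], rule ballI)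
    fix j assume "j \<in> u" then have j: "j \<in> {1..d}" using u by auto
    have "\<epsilon> * \<delta> j \<le> \<delta> j" using e0 dj[OF j] by (simp add: mult_left_le_one_le)
    moreover have "0 \<le> \<epsilon> * \<delta> j" using e0 dj[OF j] by simp
    ultimately show "0 \<le> \<epsilon> * \<delta> j \<and> \<epsilon> * \<delta> j \<le> 1" using dj[OF j] by linarith
  qed
  also have "\<dots> = \<epsilon> * S" unfolding S_def by (simp add: sum_distrib_left)
  finally have "(\<Prod>j\<in>u. \<alpha> j) \<le> (\<Prod>j\<in>u. 1 - \<delta> j) + \<eta>" using eS by linarith
  then have "1 - (\<Prod>j\<in>u. 1 - \<delta> j) - \<eta> \<le> \<bar>(\<Prod>j\<in>u. cnt (m j) (\<alpha> j)) - (\<Prod>j\<in>u. \<alpha> j)\<bar>"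
    unfolding c1 by linarith
  then show ?thesis using box unfolding LDu[OF hm u] \<delta>_def by blast
qed

lemma gen_bound:
  assumes "finite P" "\<forall>j\<in>{1..d}. 0 \<le> \<beta> j \<and> \<beta> j \<le> 1"
  shows "\<bar>local_disc d P a \<beta>\<bar> \<le> (\<Sum>x\<in>P. \<bar>a x\<bar>) + 1"
proof -
  have "\<bar>\<Sum>x\<in>P. a x * (if \<forall>j\<in>{1..d}. 0 \<le> x j \<and> x j < \<beta> j then 1 else 0)\<bar>
     \<le> (\<Sum>x\<in>P. \<bar>a x * (if \<forall>j\<in>{1..d}. 0 \<le> x j \<and> x j < \<beta> j then 1 else 0)\<bar>)" by (rule sum_abs)
  also have "\<dots> \<le> (\<Sum>x\<in>P. \<bar>a x\<bar>)" by (intro sum_mono) auto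
  finally have 1: "\<bar>\<Sum>x\<in>P. a x * (if \<forall>j\<in>{1..d}. 0 \<le> x j \<and> x j < \<beta> j then 1 else 0)\<bar> \<le> (\<Sum>x\<in>P. \<bar>a x\<bar>)" .
  have "0 \<le> (\<Prod>j\<in>{1..d}. \<beta> j)" "(\<Prod>j\<in>{1..d}. \<beta> j) \<le> 1" using assms(2)
    by (auto intro: prod_nonneg prod_le_1)
  then show ?thesis using 1 unfolding local_disc_def by linarith
qed



theorem proposition1:
  fixes d :: nat and m :: "nat \<Rightarrow> nat"
  assumes hd: "d \<ge> 1" and hm: "\<forall>j\<in>{1..d}. m j \<ge> 1"
  defines "N \<equiv> (\<Prod>j\<in>{1..d}. real (m j))"
  shows
    "(\<forall>(g::nat \<Rightarrow> real) (a::(nat \<Rightarrow> real) \<Rightarrow> real) l.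
        (\<forall>j\<in>{1..d}. 0 \<le> g j \<and> g j \<le> 1) \<longrightarrow> l \<in> {1..d} \<longrightarrow>
        weighted_star_disc d (centered_grid d m) a (\<lambda>u. \<Prod>j\<in>u. g j) \<ge> g l / (4 * real (m l)))
     \<and> star_disc d (centered_grid d m) (\<lambda>_. 1 / N) = 1 - (\<Prod>j\<in>{1..d}. 1 - 1 / (2 * real (m j)))
     \<and> (\<forall>\<gamma>::nat set \<Rightarrow> real.
        (\<forall>u. u \<noteq> {} \<and> u \<subseteq> {1..d} \<longrightarrow> 0 \<le> \<gamma> u \<and> \<gamma> u \<le> 1) \<longrightarrow>
        weighted_star_disc d (centered_grid d m) (\<lambda>_. 1 / N) \<gamma> =
          Max {\<gamma> u * (1 - (\<Prod>j\<in>u. 1 - 1 / (2 * real (m j)))) | u. u \<noteq> {} \<and> u \<subseteq> {1..d}}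
        \<and> weighted_star_disc d (centered_grid d m) (\<lambda>_. 1 / N) \<gamma> \<le>
          Max {\<gamma> u * (\<Sum>j\<in>u. 1 / (2 * real (m j))) | u. u \<noteq> {} \<and> u \<subseteq> {1..d}})"
proof -
  define G where "G = centered_grid d m"
  define D where "D = {(\<alpha>, u). \<alpha> \<in> unit_box d \<and> u \<noteq> {} \<and> (u::nat set) \<subseteq> {1..d}}"
  define B where "B = (\<lambda>u. 1 - (\<Prod>j\<in>u. 1 - 1 / (2 * real (m j))))"
  have finG: "finite G" unfolding G_def by (rule grid_fin)
  have box0: "(\<lambda>_. 0) \<in> unit_box d" unfolding unit_box_def by auto
  have D0: "((\<lambda>_. 0), {1..d}) \<in> D" unfolding D_def using box0 hd by auto
  have wsd: "weighted_star_disc d G a \<gamma> =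
      (SUP p\<in>D. \<gamma> (snd p) * \<bar>local_disc d G a (\<lambda>j. if j \<in> snd p then fst p j else 1)\<bar>)" for a \<gamma>
    unfolding weighted_star_disc_def D_def ..
  have modbox: "\<forall>j\<in>{1..d}. 0 \<le> (if j \<in> u then \<alpha> j else 1) \<and> (if j \<in> u then \<alpha> j else 1) \<le> (1::real)"
    if "\<alpha> \<in> unit_box d" for \<alpha> u using that unfolding unit_box_def by auto
  have partA: "weighted_star_disc d G a (\<lambda>u. \<Prod>j\<in>u. g j) \<ge> g l / (4 * real (m l))"
    if g: "\<forall>j\<in>{1..d}. 0 \<le> g j \<and> g j \<le> 1" and l: "l \<in> {1..d}" for g a l
  proof -
    define f where "f = (\<lambda>p. (\<Prod>j\<in>snd p. g j) * \<bar>local_disc d G a (\<lambda>j. if j \<in> snd p then fst p j else 1)\<bar>)"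
    have ml: "m l \<ge> 1" using hm l by blast
    have bdd: "bdd_above (f ` D)"
    proof (rule bdd_aboveI2)
      fix p assume p: "p \<in> D"
      then obtain \<alpha> u where pe: "p = (\<alpha>, u)" "\<alpha> \<in> unit_box d" "u \<subseteq> {1..d}" unfolding D_def by auto
      have gu: "0 \<le> (\<Prod>j\<in>u. g j)" "(\<Prod>j\<in>u. g j) \<le> 1" using g pe(3)
        by (auto intro!: prod_nonneg prod_le_1)
      have "\<bar>local_disc d G a (\<lambda>j. if j \<in> u then \<alpha> j else 1)\<bar> \<le> (\<Sum>x\<in>G. \<bar>a x\<bar>) + 1"
        by (rule gen_bound[OF finG modbox[OF pe(2)]])
      moreover have "(\<Prod>j\<in>u. g j) * \<bar>local_disc d G a (\<lambda>j. if j \<in> u then \<alpha> j else 1)\<bar>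
          \<le> \<bar>local_disc d G a (\<lambda>j. if j \<in> u then \<alpha> j else 1)\<bar>"
        using gu by (intro mult_left_le_one_le) auto
      ultimately show "f p \<le> (\<Sum>x\<in>G. \<bar>a x\<bar>) + 1" unfolding f_def pe(1) fst_conv snd_conv by linarith
    qed
    define c where "c = 1 / (2 * real (m l))"
    have pD: "((\<lambda>_. c), {l}) \<in> D" unfolding D_def unit_box_def c_def using l ml by auto
    have sum0: "(\<Sum>x\<in>G. a x * (if \<forall>j\<in>{1..d}. 0 \<le> x j \<and> x j < (if j \<in> {l} then c else 1) then 1 else 0)) = 0"
    proof (rule sum.neutral, rule ballI)
      fix x assume "x \<in> G"
      then obtain k where x: "x = gpt d m k" "k \<in> PiE {1..d} (\<lambda>j. {..<m j})"
        unfolding G_def grid_img by blast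
      have "c \<le> x l" unfolding x gpt_def c_def using l ml by (simp add: divide_right_mono)
      then show "a x * (if \<forall>j\<in>{1..d}. 0 \<le> x j \<and> x j < (if j \<in> {l} then c else 1) then 1 else 0) = 0"
        using l by auto
    qed
    have prodc: "(\<Prod>j\<in>{1..d}. (if j \<in> {l} then c else 1)) = c"
    proof -
      have "(\<Prod>j\<in>{1..d}. (if j \<in> {l} then c else 1)) = (\<Prod>j\<in>{1..d} \<inter> {l}. c)"
        by (simp add: prod.inter_restrict)
      also have "{1..d} \<inter> {l} = {l}" using l by auto
      finally show ?thesis by simp
    qed
    have ld: "local_disc d G a (\<lambda>j. if j \<in> {l} then c else 1) = - c"
      unfolding local_disc_def sum0 prodc by simp
    have "c \<ge> 0" unfolding c_def by simp
    then have "f ((\<lambda>_. c), {l}) = g l * c"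
      unfolding f_def fst_conv snd_conv ld by simp
    moreover have "g l / (4 * real (m l)) \<le> g l * c"
      unfolding c_def using g l ml by (simp add: divide_le_eq field_simps)
    ultimately have "g l / (4 * real (m l)) \<le> f ((\<lambda>_. c), {l})" by simp
    also have "\<dots> \<le> (SUP p\<in>D. f p)" by (rule cSUP_upper[OF pD bdd])
    finally show ?thesis unfolding wsd f_def by simp
  qed
  define a0 where "a0 = (\<lambda>_::nat\<Rightarrow>real. 1 / N)"
  have a0': "a0 = (\<lambda>_. 1 / (\<Prod>j\<in>{1..d}. real (m j)))" unfolding a0_def N_def ..
  have UP: "\<bar>local_disc d G a0 (\<lambda>j. if j \<in> u then \<alpha> j else 1)\<bar> \<le> B u"
    if "u \<subseteq> {1..d}" "\<alpha> \<in> unit_box d" for u \<alpha>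
    unfolding a0' G_def B_def by (rule upper[OF hm that])
  have LO: "\<exists>\<alpha>\<in>unit_box d. \<bar>local_disc d G a0 (\<lambda>j. if j \<in> u then \<alpha> j else 1)\<bar> \<ge> B u - \<eta>"
    if "u \<subseteq> {1..d}" "\<eta> > 0" for u \<eta>
    unfolding a0' G_def B_def by (rule lower[OF hm that])
  have BB: "0 \<le> B u" "B u \<le> 1" "B u \<le> (\<Sum>j\<in>u. 1 / (2 * real (m j)))" if "u \<subseteq> {1..d}" for u
    unfolding B_def using Bu_bounds[OF hm that] by auto
  have partB: "star_disc d G a0 = B {1..d}"
  proof -
    have eq: "local_disc d G a0 \<alpha> = local_disc d G a0 (\<lambda>j. if j \<in> {1..d} then \<alpha> j else 1)" for \<alpha>
      unfolding a0' G_def LD[OF hm] by (intro arg_cong2[where f="(-)"] prod.cong) auto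
    have bdd: "bdd_above ((\<lambda>\<alpha>. \<bar>local_disc d G a0 \<alpha>\<bar>) ` unit_box d)"
    proof (rule bdd_aboveI2[where M=1])
      fix \<alpha> assume "\<alpha> \<in> unit_box d"
      then have "\<bar>local_disc d G a0 \<alpha>\<bar> \<le> B {1..d}" unfolding eq[of \<alpha>] by (rule UP[OF order_refl])
      then show "\<bar>local_disc d G a0 \<alpha>\<bar> \<le> 1" using BB[OF order_refl] by linarith
    qed
    show ?thesis unfolding star_disc_def
    proof (rule antisym)
      show "(SUP \<alpha>\<in>unit_box d. \<bar>local_disc d G a0 \<alpha>\<bar>) \<le> B {1..d}"
      proof (rule cSUP_least)
        show "unit_box d \<noteq> {}" using box0 by blast
        fix \<alpha> assume "\<alpha> \<in> unit_box d"
        then show "\<bar>local_disc d G a0 \<alpha>\<bar> \<le> B {1..d}" unfolding eq[of \<alpha>] by (rule UP[OF order_refl])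
      qed
      show "B {1..d} \<le> (SUP \<alpha>\<in>unit_box d. \<bar>local_disc d G a0 \<alpha>\<bar>)"
      proof (rule field_le_epsilon)
        fix \<eta> :: real assume "0 < \<eta>"
        then obtain \<alpha> where \<alpha>: "\<alpha> \<in> unit_box d"
          "B {1..d} - \<eta> \<le> \<bar>local_disc d G a0 (\<lambda>j. if j \<in> {1..d} then \<alpha> j else 1)\<bar>"
          using LO[OF order_refl] by blast
        have "B {1..d} - \<eta> \<le> (SUP \<alpha>\<in>unit_box d. \<bar>local_disc d G a0 \<alpha>\<bar>)"
          by (rule cSUP_upper2[OF bdd \<alpha>(1)]) (simp only: eq[of \<alpha>] \<alpha>(2))
        then show "B {1..d} \<le> (SUP \<alpha>\<in>unit_box d. \<bar>local_disc d G a0 \<alpha>\<bar>) + \<eta>" by simp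
      qed
    qed
  qed
  have partC: "weighted_star_disc d G a0 \<gamma> = Max {\<gamma> u * B u | u. u \<noteq> {} \<and> u \<subseteq> {1..d}}
      \<and> weighted_star_disc d G a0 \<gamma> \<le> Max {\<gamma> u * (\<Sum>j\<in>u. 1 / (2 * real (m j))) | u. u \<noteq> {} \<and> u \<subseteq> {1..d}}"
    if hg: "\<forall>u. u \<noteq> {} \<and> u \<subseteq> {1..d} \<longrightarrow> 0 \<le> \<gamma> u \<and> \<gamma> u \<le> 1" for \<gamma>
  proof -
    define f where "f = (\<lambda>p. \<gamma> (snd p) * \<bar>local_disc d G a0 (\<lambda>j. if j \<in> snd p then fst p j else 1)\<bar>)"
    define Ms where "Ms = {\<gamma> u * B u | u. u \<noteq> {} \<and> u \<subseteq> {1..d}}"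
    define Ms2 where "Ms2 = {\<gamma> u * (\<Sum>j\<in>u. 1 / (2 * real (m j))) | u. u \<noteq> {} \<and> u \<subseteq> {1..d}}"
    have finU: "finite {u. u \<noteq> {} \<and> u \<subseteq> {1..d::nat}}"
      by (rule finite_subset[of _ "Pow {1..d}"]) auto
    have finMs: "finite Ms" unfolding Ms_def using finU by simp
    have finMs2: "finite Ms2" unfolding Ms2_def using finU by simp
    have neMs: "Ms \<noteq> {}" unfolding Ms_def using hd by auto
    have fle: "f p \<le> \<gamma> (snd p) * B (snd p)" if "p \<in> D" for p
    proof -
      have pe: "fst p \<in> unit_box d" "snd p \<noteq> {}" "snd p \<subseteq> {1..d}"
        using that unfolding D_def by (auto simp: case_prod_beta)
      have g: "0 \<le> \<gamma> (snd p)" using hg pe(2,3) by blast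
      show ?thesis unfolding f_def using UP[OF pe(3,1)] g by (rule mult_left_mono)
    qed
    have gB1: "\<gamma> u * B u \<le> 1" if "u \<noteq> {}" "u \<subseteq> {1..d}" for u
      using hg BB[OF that(2)] that by (intro mult_le_one) auto
    have bdd: "bdd_above (f ` D)"
    proof (rule bdd_aboveI2[where M=1])
      fix p assume p: "p \<in> D"
      then have "snd p \<noteq> {}" "snd p \<subseteq> {1..d}" unfolding D_def by auto
      then show "f p \<le> 1" using fle[OF p] gB1 by (meson order_trans)
    qed
    have eqM: "(SUP p\<in>D. f p) = Max Ms"
    proof (rule antisym)
      show "(SUP p\<in>D. f p) \<le> Max Ms"
      proof (rule cSUP_least)
        show "D \<noteq> {}" using D0 by blast
        fix p assume p: "p \<in> D"
        then have "\<gamma> (snd p) * B (snd p) \<in> Ms" unfolding D_def Ms_def by auto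
        then show "f p \<le> Max Ms" using fle[OF p] finMs by (meson Max_ge order_trans)
      qed
      show "Max Ms \<le> (SUP p\<in>D. f p)"
      proof (subst Max_le_iff[OF finMs neMs], rule ballI)
        fix x assume "x \<in> Ms"
        then obtain u where u: "x = \<gamma> u * B u" "u \<noteq> {}" "u \<subseteq> {1..d}" unfolding Ms_def by auto
        have g: "0 \<le> \<gamma> u" "\<gamma> u \<le> 1" using hg u by auto
        show "x \<le> (SUP p\<in>D. f p)"
        proof (rule field_le_epsilon)
          fix \<eta> :: real assume e: "0 < \<eta>"
          then obtain \<alpha> where \<alpha>: "\<alpha> \<in> unit_box d"
            "B u - \<eta> \<le> \<bar>local_disc d G a0 (\<lambda>j. if j \<in> u then \<alpha> j else 1)\<bar>"
            using LO[OF u(3)] by blast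
          have pD: "(\<alpha>, u) \<in> D" unfolding D_def using \<alpha> u by auto
          have "\<gamma> u * (B u - \<eta>) \<le> f (\<alpha>, u)" unfolding f_def fst_conv snd_conv using \<alpha>(2) g(1) by (rule mult_left_mono)
          moreover have "\<gamma> u * \<eta> \<le> \<eta>" using g e by (simp add: mult_left_le_one_le)
          ultimately have "x - \<eta> \<le> f (\<alpha>, u)" unfolding u(1) by (simp add: right_diff_distrib)
          also have "\<dots> \<le> (SUP p\<in>D. f p)" by (rule cSUP_upper[OF pD bdd])
          finally show "x \<le> (SUP p\<in>D. f p) + \<eta>" by simp
        qed
      qed
    qed
    have "Max Ms \<le> Max Ms2"
    proof (subst Max_le_iff[OF finMs neMs], rule ballI)
      fix x assume "x \<in> Ms"
      then obtain u where u: "x = \<gamma> u * B u" "u \<noteq> {}" "u \<subseteq> {1..d}" unfolding Ms_def by auto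
      have "x \<le> \<gamma> u * (\<Sum>j\<in>u. 1 / (2 * real (m j)))" unfolding u(1)
        using hg u BB[OF u(3)] by (intro mult_left_mono) auto
      also have "\<dots> \<le> Max Ms2" using finMs2 u unfolding Ms2_def by (intro Max_ge) auto
      finally show "x \<le> Max Ms2" .
    qed
    then show ?thesis using eqM unfolding wsd f_def Ms_def Ms2_def by simp
  qed
  show ?thesis
  proof (intro conjI allI impI)
    fix g :: "nat \<Rightarrow> real" and a :: "(nat \<Rightarrow> real) \<Rightarrow> real" and l
    assume "\<forall>j\<in>{1..d}. 0 \<le> g j \<and> g j \<le> 1" "l \<in> {1..d}"
    from partA[OF this, of a] show "g l / (4 * real (m l)) \<le> weighted_star_disc d (centered_grid d m) a (\<lambda>u. \<Prod>j\<in>u. g j)"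
      unfolding G_def .
  next
    show "star_disc d (centered_grid d m) (\<lambda>_. 1 / N) = 1 - (\<Prod>j\<in>{1..d}. 1 - 1 / (2 * real (m j)))"
      using partB unfolding G_def a0_def B_def .
  next
    fix \<gamma> :: "nat set \<Rightarrow> real"
    assume h: "\<forall>u. u \<noteq> {} \<and> u \<subseteq> {1..d} \<longrightarrow> 0 \<le> \<gamma> u \<and> \<gamma> u \<le> 1"
    note c = partC[OF h, unfolded G_def a0_def B_def]
    show "weighted_star_disc d (centered_grid d m) (\<lambda>_. 1 / N) \<gamma> =
          Max {\<gamma> u * (1 - (\<Prod>j\<in>u. 1 - 1 / (2 * real (m j)))) | u. u \<noteq> {} \<and> u \<subseteq> {1..d}}"
      using c by (rule conjunct1)
    show "weighted_star_disc d (centered_grid d m) (\<lambda>_. 1 / N) \<gamma> \<le>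
          Max {\<gamma> u * (\<Sum>j\<in>u. 1 / (2 * real (m j))) | u. u \<noteq> {} \<and> u \<subseteq> {1..d}}"
      using c by (rule conjunct2)
  qed
qed

end
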